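(* Let $\varphi=\frac{1+\sqrt5}{2}$ and for every integer $k$ let $F_k=\frac{\varphi^k-(-1/\varphi)^k}{\varphi+1/\varphi}$. On the complex vector space with basis $\{|n_1,n_2\rangle:n_1,n_2\ge0\}$ define, for $i=1,2$, operators $N_i$, $b_i$, $b_i^+$ acting on the $i$-th index by $N_1|n_1,n_2\rangle=n_1|n_1,n_2\rangle$, $b_1^+|n_1,n_2\rangle=\sqrt{F_{n_1+1}}|n_1+1,n_2\rangle$, $b_1|n_1,n_2\rangle=\sqrt{F_{n_1}}|n_1-1,n_2\rangle$ (zero if $n_1=0$), and analogously for index 2. Let $(-1)^{-N_2/2}$ be the diagonal operator acting on $|n_1,n_2\rangle$ by $e^{-i\pi n_2/2}$, let $J_z=\frac{N_1-N_2}2$, and let $[2J_z]_F$ be the diagonal operator acting by $F_{n_1-n_2}$. Define $$\tilde J_+^F=(-1)^{-N_2/2}b_1^+b_2,\qquad \tilde J_-^F=b_2^+b_1(-1)^{-N_2/2},\qquad \tilde J_z^F=J_z.$$ Then $$\tilde J_+^F\tilde J_-^F+\tilde J_-^F\tilde J_+^F=[2J_z]_F,\qquad [\tilde J_z^F,\tilde J_\pm^F]=\pm\tilde J_\pm^F.$$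
   Context: $[A,B]=AB-BA$. *)

theory Defs
  imports Complex_Main
begin

definition phi :: real where "phi = (1 + sqrt 5) / 2"

definition Fib :: "int \<Rightarrow> real" where
  "Fib k = (phi powi k - (- 1 / phi) powi k) / (phi + 1 / phi)"

text \<open>Vectors of the space with basis |n1,n2>, represented by their coefficient
  functions: v (n1,n2) is the coefficient of |n1,n2>.  Operators act on
  coefficient functions; the formulas below are exactly the linear extensions
  of the prescribed actions on basis vectors.\<close>
type_synonym vec = "nat \<times> nat \<Rightarrow> complex"
type_synonym op = "vec \<Rightarrow> vec"

text \<open>b1^+ |n1,n2> = sqrt(F_(n1+1)) |n1+1,n2>\<close>
definition b1p :: op where
  "b1p v = (\<lambda>(n1, n2). if n1 = 0 then 0
      else complex_of_real (sqrt (Fib (int n1))) * v (n1 - 1, n2))"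

text \<open>b1 |n1,n2> = sqrt(F_n1) |n1-1,n2> (zero if n1 = 0)\<close>
definition b1 :: op where
  "b1 v = (\<lambda>(n1, n2). complex_of_real (sqrt (Fib (int n1 + 1))) * v (n1 + 1, n2))"

definition b2p :: op where
  "b2p v = (\<lambda>(n1, n2). if n2 = 0 then 0
      else complex_of_real (sqrt (Fib (int n2))) * v (n1, n2 - 1))"

definition b2 :: op where
  "b2 v = (\<lambda>(n1, n2). complex_of_real (sqrt (Fib (int n2 + 1))) * v (n1, n2 + 1))"

definition N1 :: op where "N1 v = (\<lambda>(n1, n2). of_nat n1 * v (n1, n2))"
definition N2 :: op where "N2 v = (\<lambda>(n1, n2). of_nat n2 * v (n1, n2))"

definition phaseN2 :: op where
  "phaseN2 v = (\<lambda>(n1, n2). exp (- \<i> * of_real pi * of_nat n2 / 2) * v (n1, n2))"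

definition Jz :: op where "Jz v = (\<lambda>x. (N1 v x - N2 v x) / 2)"

definition twoJzF :: op where
  "twoJzF v = (\<lambda>(n1, n2). complex_of_real (Fib (int n1 - int n2)) * v (n1, n2))"

definition JpF :: op where "JpF = phaseN2 \<circ> b1p \<circ> b2"
definition JmF :: op where "JmF = b2p \<circ> b1 \<circ> phaseN2"
definition JzF :: op where "JzF = Jz"

definition opplus :: "op \<Rightarrow> op \<Rightarrow> op" where "opplus A B = (\<lambda>v x. A v x + B v x)"
definition commut :: "op \<Rightarrow> op \<Rightarrow> op" where "commut A B = (\<lambda>v x. A (B v) x - B (A v) x)"

end

theory Submission
  imports Defs
begin

lemma phi_facts: "phi > 1" "phi * (-1/phi) = -1" "phi + 1/phi = phi - (-1/phi)" "phi + 1/phi > 0"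
proof -
  have "sqrt 5 > 1" by (simp add: real_less_rsqrt)
  thus p: "phi > 1" unfolding phi_def by simp
  show "phi * (-1/phi) = -1" using p by simp
  show "phi + 1/phi = phi - (-1/phi)" by simp
  show "phi + 1/phi > 0" using p by (smt (verit) divide_pos_pos)
qed

lemma Fib_nat: "Fib (int n) = (phi ^ n - (-1/phi) ^ n) / (phi + 1/phi)"
  unfolding Fib_def by (simp add: power_int_of_nat)

lemma Fib_nonneg: "Fib (int n) \<ge> 0"
proof -
  have p: "phi > 1" by (rule phi_facts)
  have "(-1/phi)^n \<le> \<bar>-1/phi\<bar>^n" by (metis power_abs abs_ge_self)
  also have "\<dots> \<le> 1" using p by (intro power_le_one) auto
  also have "1 \<le> phi ^ n" using p by simp
  finally show ?thesis unfolding Fib_nat using phi_facts(4) by simp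
qed

lemma Fib_nat1: "Fib (int n + 1) = Fib (int (Suc n))" by (simp add: add.commute)

lemma docagne_gen:
  fixes a b :: real
  assumes ab: "a * b = -1"
  shows "(a^m - b^m)*(a^(Suc n)-b^(Suc n)) - (a^n-b^n)*(a^(Suc m)-b^(Suc m))
     = (-1)^n*(a-b)*(a powi (int m - int n) - b powi (int m - int n))"
proof -
  have a0: "a \<noteq> 0" and b0: "b \<noteq> 0" using ab by auto
  define d where "d = int m - int n"
  define X where "X = a^n"
  define Y where "Y = b^n"
  define P where "P = a powi d"
  define Q where "Q = b powi d"
  have am: "a^m = P * X"
  proof -
    have "a^m = a powi (d + int n)" unfolding d_def by (simp add: power_int_of_nat)
    also have "\<dots> = P * X" unfolding P_def X_def using a0 by (simp add: power_int_add power_int_of_nat)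
    finally show ?thesis .
  qed
  have bm: "b^m = Q * Y"
  proof -
    have "b^m = b powi (d + int n)" unfolding d_def by (simp add: power_int_of_nat)
    also have "\<dots> = Q * Y" unfolding Q_def Y_def using b0 by (simp add: power_int_add power_int_of_nat)
    finally show ?thesis .
  qed
  have xy': "X*Y = (-1)^n" unfolding X_def Y_def using ab by (simp add: power_mult_distrib[symmetric])
  have "(a^m - b^m)*(a^(Suc n)-b^(Suc n)) - (a^n-b^n)*(a^(Suc m)-b^(Suc m))
       = (P*X - Q*Y)*(a*X - b*Y) - (X - Y)*(a*(P*X) - b*(Q*Y))"
    unfolding power_Suc am bm X_def[symmetric] Y_def[symmetric] ..
  also have "\<dots> = (X*Y)*(a-b)*(P-Q)" by (simp add: algebra_simps)
  finally show ?thesis using xy' P_def Q_def d_def by simp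
qed

lemma docagne: "Fib (int m) * Fib (int n + 1) - Fib (int n) * Fib (int m + 1)
   = (-1)^n * Fib (int m - int n)"
proof -
  define a where "a = phi"
  define b where "b = -1/phi"
  have ab: "a*b = -1" using phi_facts(2) a_def b_def by simp
  have s: "phi + 1/phi = a - b" using a_def b_def by simp
  have s0: "a - b \<noteq> 0" using phi_facts(4) s by simp
  have F: "\<And>k. Fib (int k) = (a^k - b^k)/(a-b)" unfolding Fib_nat s using a_def b_def by simp
  have "Fib (int m) * Fib (int n + 1) - Fib (int n) * Fib (int m + 1)
     = ((a^m - b^m)*(a^(Suc n)-b^(Suc n)) - (a^n-b^n)*(a^(Suc m)-b^(Suc m))) / (a-b)^2"
    unfolding Fib_nat1 F
    by (simp only: diff_divide_distrib[symmetric] times_divide_times_eq power2_eq_square)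
  also have "\<dots> = (-1)^n * ((a powi (int m - int n) - b powi (int m - int n)) / (a - b))"
    unfolding docagne_gen[OF ab] using s0 by (simp add: power2_eq_square)
  also have "\<dots> = (-1)^n * Fib (int m - int n)"
    unfolding Fib_def s using a_def b_def by simp
  finally show ?thesis .
qed

lemma phase2: "exp (- \<i> * of_real pi * of_nat n / 2) * exp (- \<i> * of_real pi * of_nat n / 2)
   = ((-1)^n :: complex)"
proof -
  have "exp (- \<i> * of_real pi * of_nat n / 2) * exp (- \<i> * of_real pi * of_nat n / 2)
      = exp (of_nat n * (- (\<i> * of_real pi)))"
    by (simp add: exp_add[symmetric] algebra_simps)
  also have "\<dots> = exp (- (\<i> * of_real pi)) ^ n" by (rule exp_of_nat_mult)
  also have "exp (- (\<i> * of_real pi)) = -1"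
    by (simp add: exp_minus)
  finally show ?thesis .
qed

lemma sq: "complex_of_real (sqrt (Fib (int n))) * complex_of_real (sqrt (Fib (int n))) = complex_of_real (Fib (int n))"
  using Fib_nonneg[of n] by (simp flip: of_real_mult)

lemma part1: "opplus (JpF \<circ> JmF) (JmF \<circ> JpF) = twoJzF"
proof (intro ext)
  fix v :: vec and x :: "nat \<times> nat"
  obtain n1 n2 where x: "x = (n1, n2)" by (cases x)
  define e where "e = (\<lambda>n::nat. exp (- \<i> * of_real pi * of_nat n / 2))"
  define f where "f = (\<lambda>n::nat. complex_of_real (sqrt (Fib (int n))))"
  have ff: "\<And>n. f n * f n = complex_of_real (Fib (int n))" unfolding f_def by (rule sq)
  have ee: "\<And>n. e n * e n = (-1)^n" unfolding e_def by (rule phase2)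
  have f0: "f 0 = 0" unfolding f_def Fib_def by simp
  have A: "(JpF \<circ> JmF) v (n1,n2) = (-1)^n2 * of_real (Fib (int n1) * Fib (int n2 + 1)) * v (n1,n2)"
  proof (cases "n1 = 0")
    case True thus ?thesis using f0 unfolding f_def by (simp add: JpF_def JmF_def phaseN2_def b1p_def b2_def b2p_def b1_def)
  next
    case False
    have "(JpF \<circ> JmF) v (n1,n2) = e n2 * (f n1 * (f (Suc n2) * (f (Suc n2) * (f n1 * (e n2 * v (n1,n2))))))"
      using False by (simp add: JpF_def JmF_def phaseN2_def b1p_def b2_def b2p_def b1_def e_def f_def Fib_nat1)
    also have "\<dots> = (e n2 * e n2) * (f n1 * f n1) * (f (Suc n2) * f (Suc n2)) * v (n1,n2)"
      by (simp add: algebra_simps)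
    also have "\<dots> = (-1)^n2 * (complex_of_real (Fib (int n1)) * complex_of_real (Fib (int (Suc n2)))) * v (n1,n2)"
      by (simp only: ee ff mult.assoc)
    finally show ?thesis by (simp add: Fib_nat1)
  qed
  have B: "(JmF \<circ> JpF) v (n1,n2) = - ((-1)^n2 * of_real (Fib (int n2) * Fib (int n1 + 1)) * v (n1,n2))"
  proof (cases "n2 = 0")
    case True thus ?thesis using f0 unfolding f_def by (simp add: JpF_def JmF_def phaseN2_def b1p_def b2_def b2p_def b1_def)
  next
    case False
    then obtain k where k: "n2 = Suc k" using not0_implies_Suc by blast
    have "(JmF \<circ> JpF) v (n1,n2) = f n2 * (f (Suc n1) * (e k * (e k * (f (Suc n1) * (f n2 * v (n1,n2))))))"
      using k by (simp add: JpF_def JmF_def phaseN2_def b1p_def b2_def b2p_def b1_def e_def f_def Fib_nat1)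
    also have "\<dots> = (e k * e k) * (f n2 * f n2) * (f (Suc n1) * f (Suc n1)) * v (n1,n2)"
      by (simp add: algebra_simps)
    also have "\<dots> = (-1)^k * (complex_of_real (Fib (int n2)) * complex_of_real (Fib (int (Suc n1)))) * v (n1,n2)"
      by (simp only: ee ff mult.assoc)
    finally show ?thesis using k by (simp add: Fib_nat1)
  qed
  have "opplus (JpF \<circ> JmF) (JmF \<circ> JpF) v (n1,n2)
     = (-1)^n2 * of_real (Fib (int n1) * Fib (int n2 + 1) - Fib (int n2) * Fib (int n1 + 1)) * v (n1,n2)"
    unfolding opplus_def A B by (simp add: algebra_simps)
  also have "\<dots> = of_real (Fib (int n1 - int n2)) * v (n1,n2)"
    unfolding docagne by (simp add: mult.assoc[symmetric] power_mult_distrib[symmetric])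
  finally show "opplus (JpF \<circ> JmF) (JmF \<circ> JpF) v x = twoJzF v x"
    unfolding x twoJzF_def by simp
qed

lemma JpF_Suc: "\<exists>C. \<forall>w. JpF w (Suc k, n2) = C * w (k, Suc n2)"
  by (rule exI[of _ "exp (- \<i> * of_real pi * of_nat n2 / 2) * (complex_of_real (sqrt (Fib (int (Suc k)))) * complex_of_real (sqrt (Fib (int n2 + 1))))"])
     (simp add: JpF_def phaseN2_def b1p_def b2_def)

lemma JmF_Suc: "\<exists>C. \<forall>w. JmF w (n1, Suc k) = C * w (Suc n1, k)"
  by (rule exI[of _ "complex_of_real (sqrt (Fib (int (Suc k)))) * complex_of_real (sqrt (Fib (int n1 + 1))) * exp (- \<i> * of_real pi * of_nat k / 2)"])
     (simp add: JmF_def phaseN2_def b1_def b2p_def)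

lemma Jz_at: "Jz w (a, b) = (of_nat a - of_nat b) / 2 * w (a, b)"
  by (simp add: Jz_def N1_def N2_def field_simps)

lemma part2: "commut JzF JpF = JpF"
proof (intro ext)
  fix v :: vec and x :: "nat \<times> nat"
  obtain n1 n2 where x: "x = (n1, n2)" by (cases x)
  show "commut JzF JpF v x = JpF v x"
  proof (cases n1)
    case 0 thus ?thesis unfolding x by (simp add: commut_def JzF_def Jz_at JpF_def phaseN2_def b1p_def)
  next
    case (Suc k)
    obtain C where C: "\<And>w. JpF w (Suc k, n2) = C * w (k, Suc n2)" using JpF_Suc by blast
    have d: "(of_nat (Suc k) - of_nat n2) / 2 - (of_nat k - of_nat (Suc n2)) / 2 = (1::complex)"
      by (simp add: diff_divide_distrib[symmetric] of_nat_Suc)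
    have "commut JzF JpF v (Suc k, n2) = ((of_nat (Suc k) - of_nat n2) / 2 - (of_nat k - of_nat (Suc n2)) / 2) * (C * v (k, Suc n2))"
      unfolding commut_def JzF_def C Jz_at by (simp only: left_diff_distrib right_diff_distrib mult.left_commute)
    thus ?thesis unfolding x Suc d C by simp
  qed
qed

lemma part3: "commut JzF JmF = (\<lambda>v x. - JmF v x)"
proof (intro ext)
  fix v :: vec and x :: "nat \<times> nat"
  obtain n1 n2 where x: "x = (n1, n2)" by (cases x)
  show "commut JzF JmF v x = - JmF v x"
  proof (cases n2)
    case 0 thus ?thesis unfolding x by (simp add: commut_def JzF_def Jz_at JmF_def phaseN2_def b2p_def)
  next
    case (Suc k)
    obtain C where C: "\<And>w. JmF w (n1, Suc k) = C * w (Suc n1, k)" using JmF_Suc by blast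
    have d: "(of_nat n1 - of_nat (Suc k)) / 2 - (of_nat (Suc n1) - of_nat k) / 2 = (-1::complex)"
      by (simp add: diff_divide_distrib[symmetric] of_nat_Suc)
    have "commut JzF JmF v (n1, Suc k) = ((of_nat n1 - of_nat (Suc k)) / 2 - (of_nat (Suc n1) - of_nat k) / 2) * (C * v (Suc n1, k))"
      unfolding commut_def JzF_def C Jz_at by (simp only: left_diff_distrib right_diff_distrib mult.left_commute)
    thus ?thesis unfolding x Suc d C by simp
  qed
qed

theorem mainTheorem15:
  shows "opplus (JpF \<circ> JmF) (JmF \<circ> JpF) = twoJzF
    \<and> commut JzF JpF = JpF
    \<and> commut JzF JmF = (\<lambda>v x. - JmF v x)"
  using part1 part2 part3 by blast

end
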